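(* There exists an elliptic curve $E$ defined over $\mathbf{Q}$ with $S_y(E) \geq 7$; that is, there exist an elliptic curve $E/\mathbf{Q}$ and seven distinct rational points $P_1,\dots,P_7 \in E(\mathbf{Q})$ whose $y$-coordinates, after a suitable reordering, form an arithmetic progression with nonzero common difference.
   Context: An elliptic curve over $\mathbf{Q}$ is given by a general Weierstrass equation $Y^2 + a_1XY + a_3Y = X^3 + a_2X^2 + a_4X + a_6$ with $a_i \in \mathbf{Q}$ and nonzero discriminant. Rational points $P_0,\dots,P_n \in E$ are said to form a $y$-arithmetic progression if their $y$-coordinates (not necessarily in the order of the indices) form an arithmetic progression with nonzero common difference; $S_y(E)$ denotes the maximal number of rational points of $E$ forming a $y$-arithmetic progression. *)

theory Defs
  imports Main "HOL.Rat"
begin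

definition ec_disc :: "rat \<Rightarrow> rat \<Rightarrow> rat \<Rightarrow> rat \<Rightarrow> rat \<Rightarrow> rat" where
  "ec_disc a1 a2 a3 a4 a6 =
     (let b2 = a1^2 + 4*a2;
          b4 = 2*a4 + a1*a3;
          b6 = a3^2 + 4*a6;
          b8 = a1^2*a6 + 4*a2*a6 - a1*a3*a4 + a2*a3^2 - a4^2
      in 0 - b2^2*b8 - 8*b4^3 - 27*b6^2 + 9*b2*b4*b6)"

definition on_curve :: "rat \<Rightarrow> rat \<Rightarrow> rat \<Rightarrow> rat \<Rightarrow> rat \<Rightarrow> rat \<Rightarrow> rat \<Rightarrow> bool" where
  "on_curve a1 a2 a3 a4 a6 x y \<longleftrightarrow>
     y^2 + a1*x*y + a3*y = x^3 + a2*x^2 + a4*x + a6"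

end

theory Submission
  imports Defs
begin

definition PP :: "nat \<Rightarrow> rat \<times> rat" where
  "PP i = (if i = 0 \<or> i = 6 then -7 else if i = 1 \<or> i = 5 then -8
           else if i = 2 \<or> i = 4 then -5 else -4, of_nat i)"

lemma lt7: "(i::nat) < 7 \<longleftrightarrow> i = 0 \<or> i = 1 \<or> i = 2 \<or> i = 3 \<or> i = 4 \<or> i = 5 \<or> i = 6"
  by auto

theorem theorem1:
  shows "\<exists>a1 a2 a3 a4 a6 :: rat. ec_disc a1 a2 a3 a4 a6 \<noteq> 0 \<and>
    (\<exists>(P :: nat \<Rightarrow> rat \<times> rat) (c :: rat) (d :: rat) (\<sigma> :: nat \<Rightarrow> nat).
        inj_on P {..<7} \<and>
        (\<forall>i<7. on_curve a1 a2 a3 a4 a6 (fst (P i)) (snd (P i))) \<and>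
        d \<noteq> 0 \<and>
        bij_betw \<sigma> {..<7} {..<7} \<and>
        (\<forall>k<7. snd (P (\<sigma> k)) = c + of_nat k * d))"
proof (intro exI conjI)
  show "ec_disc 0 17 (-6) 91 147 \<noteq> 0" by (simp add: ec_disc_def Let_def)
  show "inj_on PP {..<7}" by (rule inj_onI) (simp add: PP_def)
  show "\<forall>i<7. on_curve 0 17 (-6) 91 147 (fst (PP i)) (snd (PP i))"
    unfolding lt7 by (auto simp: on_curve_def PP_def)
  show "(1::rat) \<noteq> 0" by simp
  show "bij_betw id {..<7::nat} {..<7}" by simp
  show "\<forall>k<7. snd (PP (id k)) = 0 + of_nat k * 1" by (simp add: PP_def)
qed

end
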